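(* Let $0<k<n$ and $d$ be integers. Then $C_{12}>0$ for every allowable critical data set $A_c=(\alpha_c,n_1,d_1,k_1,n_2,d_2,k_2)$ for type $(n,d,k)$ with $k_1=1$.
   Context: Write $d=na-t$ with integers $a,t$, $0\le t<n$, and $ka=l(n-k)+t+m$ with integers $l,m$, $0\le m<n-k$. A critical data set for type $(n,d,k)$ is a tuple $A_c=(\alpha_c,n_1,d_1,k_1,n_2,d_2,k_2)$ with integers $n_i\ge1$, $k_i\ge0$, $d_i$ such that $n_1+n_2=n$, $d_1+d_2=d$, $k_1+k_2=k$, $\frac{d_2}{n_2}>\frac{d_1}{n_1}$, $\frac{k_1}{n_1}>\frac{k_2}{n_2}$, and $\alpha_c=\frac{d_2n_1-d_1n_2}{n_2k_1-n_1k_2}$. It is allowable if moreover $\frac tk<\alpha_c<\frac{ln+t}{k}$, $d\ge\frac1k(n^2-1)-(n-k)$, $d_1\ge\frac1{k_1}(n_1^2-1)-(n_1-k_1)$, and either ($k_2=0$ and $n_2=1$) or ($k_2\ge1$ and $d_2\ge\frac1{k_2}(n_2^2-1)-(n_2-k_2)$). Define $C_{12}=-n_1n_2-d_2n_1+d_1n_2+k_1(d_2+n_2-k_2)$. *)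

theory Defs
  imports Complex_Main
begin

definition critical_data_set ::
  "int \<Rightarrow> int \<Rightarrow> int \<Rightarrow> real \<Rightarrow> int \<Rightarrow> int \<Rightarrow> int \<Rightarrow> int \<Rightarrow> int \<Rightarrow> int \<Rightarrow> bool" where
  "critical_data_set n d k \<alpha> n1 d1 k1 n2 d2 k2 \<longleftrightarrow>
     n1 \<ge> 1 \<and> n2 \<ge> 1 \<and> k1 \<ge> 0 \<and> k2 \<ge> 0 \<and>
     n1 + n2 = n \<and> d1 + d2 = d \<and> k1 + k2 = k \<and>
     real_of_int d2 / real_of_int n2 > real_of_int d1 / real_of_int n1 \<and>
     real_of_int k1 / real_of_int n1 > real_of_int k2 / real_of_int n2 \<and>
     \<alpha> = real_of_int (d2 * n1 - d1 * n2) / real_of_int (n2 * k1 - n1 * k2)"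

text \<open>Allowability; t and l are the integers attached to the type (n,d,k).\<close>
definition allowable_critical_data_set ::
  "int \<Rightarrow> int \<Rightarrow> int \<Rightarrow> int \<Rightarrow> int \<Rightarrow> real \<Rightarrow> int \<Rightarrow> int \<Rightarrow> int \<Rightarrow> int \<Rightarrow> int \<Rightarrow> int \<Rightarrow> bool" where
  "allowable_critical_data_set n d k t l \<alpha> n1 d1 k1 n2 d2 k2 \<longleftrightarrow>
     critical_data_set n d k \<alpha> n1 d1 k1 n2 d2 k2 \<and>
     real_of_int t / real_of_int k < \<alpha> \<and>
     \<alpha> < real_of_int (l * n + t) / real_of_int k \<and>
     real_of_int d \<ge> real_of_int (n^2 - 1) / real_of_int k - real_of_int (n - k) \<and>
     real_of_int d1 \<ge> real_of_int (n1^2 - 1) / real_of_int k1 - real_of_int (n1 - k1) \<and>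
     ((k2 = 0 \<and> n2 = 1) \<or>
      (k2 \<ge> 1 \<and> real_of_int d2 \<ge> real_of_int (n2^2 - 1) / real_of_int k2 - real_of_int (n2 - k2)))"

definition C12 :: "int \<Rightarrow> int \<Rightarrow> int \<Rightarrow> int \<Rightarrow> int \<Rightarrow> int \<Rightarrow> int" where
  "C12 n1 d1 k1 n2 d2 k2 = - n1 * n2 - d2 * n1 + d1 * n2 + k1 * (d2 + n2 - k2)"

end

theory Submission
  imports Defs
begin

lemma final_ineq:
  fixes n1 n2 k2 e m :: int
  assumes "n1 \<ge> 2" "k2 \<ge> 1" "n2 \<ge> n1*k2 + 1" "e \<ge> 1" "0 \<le> m" "m \<le> (1+k2)*e - 1"
  shows "(n2-k2)*(n1+n2-1)*e - (n1-1)*n2*m - k2*(n2-k2) + (n1-1)*(k2^2-1+k2*e) > 0"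
proof -
  define D where "D = n2 - n1*k2"
  have D1: "D \<ge> 1" using assms D_def by simp
  have nk: "n1*k2 \<ge> 1*k2" using assms by (intro mult_right_mono) auto
  have n2p: "n2 \<ge> 1" using nk assms by linarith
  have "(n1-1)*n2*m \<le> (n1-1)*n2*((1+k2)*e - 1)"
  proof (rule mult_left_mono)
    show "0 \<le> (n1-1)*n2" using assms n2p by simp
  qed (use assms in simp)
  moreover have "(n2-k2)*(n1+n2-1)*e - (n1-1)*n2*((1+k2)*e - 1) - k2*(n2-k2) + (n1-1)*(k2^2-1+k2*e)
      = n2*D*e + ((n1-1)*n2 - k2*(n2-k2) + (n1-1)*(k2^2-1))"
    unfolding D_def by (simp add: algebra_simps power2_eq_square)
  moreover have "n2*D*e \<ge> n2*D*1"
    using assms D1 n2p by (intro mult_left_mono) auto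
  moreover have "n2*D + ((n1-1)*n2 - k2*(n2-k2) + (n1-1)*(k2^2-1)) > 0"
  proof (cases "D + n1 - 1 - k2 \<ge> 0")
    case True
    have "n2*D + ((n1-1)*n2 - k2*(n2-k2) + (n1-1)*(k2^2-1)) = n2*(D + n1 - 1 - k2) + k2^2 + (n1-1)*(k2^2-1)"
      by (simp add: algebra_simps power2_eq_square)
    moreover have "n2*(D + n1 - 1 - k2) \<ge> 0" using True n2p by simp
    moreover have "(n1-1)*(k2^2-1) \<ge> 0" using assms by (simp add: power2_eq_square)
    moreover have "k2^2 > 0" using assms by simp
    ultimately show ?thesis by linarith
  next
    case False
    define j where "j = k2 - (D + n1 - 1)"
    have j0: "j > 0" "j \<le> k2 - n1" using False D1 j_def by auto
    have eq: "n2*D + ((n1-1)*n2 - k2*(n2-k2) + (n1-1)*(k2^2-1)) = n1*k2^2 - n1 + 1 - (n1*k2 + D)*j"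
      unfolding j_def D_def by (simp add: algebra_simps power2_eq_square)
    have "(n1*k2 + D)*j = (n1*k2 + k2 - n1 + 1 - j)*j" unfolding j_def by simp
    also have "\<dots> \<le> (n1*k2 + 1)*(k2 - n1)"
    proof -
      have "(n1*k2 + 1)*(k2 - n1) - (n1*k2 + k2 - n1 + 1 - j)*j = (k2 - n1 - j)*(n1*k2 + 1 - j)"
        by (simp add: algebra_simps)
      moreover have "(k2 - n1 - j) \<ge> 0" "n1*k2 + 1 - j \<ge> 0" using j0 assms
      proof -
        have "n1*k2 \<ge> 1*k2" using assms by (intro mult_right_mono) auto
        then show "(k2 - n1 - j) \<ge> 0" "n1*k2 + 1 - j \<ge> 0" using j0 assms by linarith+
      qed
      ultimately show ?thesis by (metis diff_ge_0_iff_ge zero_le_mult_iff)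
    qed
    finally have "(n1*k2 + D)*j \<le> (n1*k2 + 1)*(k2 - n1)" .
    moreover have "(n1*k2 + 1)*(k2 - n1) < n1*k2^2 - n1 + 1"
    proof -
      have "(n1*k2 + 1)*(k2 - n1) = n1*k2^2 - n1 - k2*(n1*n1 - 1)"
        by (simp add: algebra_simps power2_eq_square)
      moreover have "k2*(n1*n1-1) > 0"
      proof -
        have "n1*n1 \<ge> 2*2" using assms by (intro mult_mono) auto
        then show ?thesis using assms by (intro mult_pos_pos) auto
      qed
      ultimately show ?thesis by linarith
    qed
    ultimately show ?thesis using eq by linarith
  qed
  ultimately show ?thesis by linarith
qed

lemma ident1:
  fixes n1 n2 k2 q m e :: int
  shows "((1+k2)*((n1+n2-(1+k2))*q + m) - (n1+n2)*m)*(n2 - n1*k2)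
     - (1+k2)*(n1+n2-(1+k2))*(((n1+n2-(1+k2))*q + m - (e + (n1-1)*q))*n1 - (e + (n1-1)*q)*n2)
     = (n1+n2)*(n1+n2-(1+k2))*((1+k2)*e - m)"
  by (simp add: algebra_simps)

lemma ident2:
  fixes n1 n2 k2 q m e :: int
  shows "C12 n1 (e + (n1-1)*q) 1 n2 ((n1+n2-(1+k2))*q + m - (e + (n1-1)*q)) k2
     = (n1+n2-1)*e - (n1-1)*m + k2*(n1-1)*q + n2 - k2 - n1*n2"
  unfolding C12_def by (simp add: algebra_simps)

lemma ident3:
  fixes n1 n2 k2 q m e :: int
  shows "(n2-k2)*((n1+n2-1)*e - (n1-1)*m + k2*(n1-1)*q + n2 - k2 - n1*n2)
    - ((n2-k2)*(n1+n2-1)*e - (n1-1)*n2*m - k2*(n2-k2) + (n1-1)*(k2^2-1+k2*e))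
    = (n1-1)*(k2*(q*(n2-k2)+m-e)) - (n1-1)*(n2^2-1-k2*(n2-k2))"
  by (simp add: algebra_simps power2_eq_square)

theorem proposition5p5:
  fixes n d k a t l m n1 d1 k1 n2 d2 k2 :: int and \<alpha> :: real
  assumes "0 < k" and "k < n"
    and "d = n * a - t" and "0 \<le> t" and "t < n"
    and "k * a = l * (n - k) + t + m" and "0 \<le> m" and "m < n - k"
    and "allowable_critical_data_set n d k t l \<alpha> n1 d1 k1 n2 d2 k2"
    and "k1 = 1"
  shows "C12 n1 d1 k1 n2 d2 k2 > 0"
proof -
  note A = assms(9)[unfolded allowable_critical_data_set_def critical_data_set_def]
  have n1: "n1 \<ge> 1" and n2: "n2 \<ge> 1" and k2: "k2 \<ge> 0" and nn: "n = n1 + n2"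
    and dd: "d = d1 + d2" and kk: "k = 1 + k2" using A assms(10) by auto
  have frac: "real_of_int k1 / real_of_int n1 > real_of_int k2 / real_of_int n2" using A by blast
  have "real_of_int k2 * real_of_int n1 < real_of_int n2"
    using frac n1 n2 assms(10) by (simp add: field_simps)
  hence Dpos: "n2 - n1*k2 > 0" by (simp add: algebra_simps flip: of_int_mult of_int_less_iff)
  define D where "D = n2 - n1*k2"
  define N where "N = d2*n1 - d1*n2"
  define s where "s = l*n + t"
  have al: "\<alpha> = real_of_int N / real_of_int D" using A assms(10) unfolding N_def D_def by simp
  have "\<alpha> < real_of_int s / real_of_int k" using A unfolding s_def by blast
  hence "real_of_int N / real_of_int D < real_of_int s / real_of_int k" using al by simp
  hence "real_of_int N * real_of_int k < real_of_int s * real_of_int D"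
  proof -
    have Dr: "real_of_int D > 0" using Dpos unfolding D_def by (simp only: of_int_pos)
    have kr: "real_of_int k > 0" using assms(1) by simp
    show ?thesis using \<open>real_of_int N / real_of_int D < real_of_int s / real_of_int k\<close> Dr kr
      by (simp add: field_simps)
  qed
  hence kN: "k*N < s*D" by (simp add: algebra_simps flip: of_int_mult of_int_less_iff)
  define q where "q = a + l"
  have dq: "d = (n-k)*q + m" unfolding q_def using assms(3,6) by (simp add: algebra_simps)
  have sq: "(n-k)*s = k*d - n*m"
  proof -
    have "(n-k)*s = n*(l*(n-k)) + (n-k)*t" unfolding s_def by (simp add: algebra_simps)
    also have "\<dots> = n*(k*a - t - m) + (n-k)*t" using assms(6) by simp
    also have "\<dots> = k*(n*a - t) - n*m" by (simp add: algebra_simps)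
    finally show ?thesis using assms(3) by simp
  qed
  define e where "e = d1 - (n1-1)*q"
  have d1e: "d1 = e + (n1-1)*q" unfolding e_def by simp
  have d2e: "d2 = (n-k)*q + m - d1" using dq dd by simp
  have nkpos: "n - k > 0" using assms by simp
  have "(n-k)*(k*N) < (n-k)*(s*D)" using kN nkpos by simp
  hence "k*(n-k)*N < ((n-k)*s)*D" by (simp add: algebra_simps)
  hence "k*(n-k)*N < (k*d - n*m)*D" using sq by simp
  moreover have "(k*d - n*m)*D - k*(n-k)*N = n*(n-k)*(k*e - m)"
    unfolding D_def N_def d2e using ident1[of k2 n1 n2 q m e] dq d1e nn kk by simp
  ultimately have "n*(n-k)*(k*e - m) > 0" by linarith
  moreover have "n*(n-k) > 0" using nkpos assms by simp
  ultimately have kem: "k*e > m" using zero_less_mult_pos by fastforce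
  have e1: "e \<ge> 1"
  proof (rule ccontr)
    assume "\<not> e \<ge> 1"
    hence "e \<le> 0" by simp
    hence "k*e \<le> 0" using assms(1) by (simp add: mult_nonneg_nonpos)
    thus False using kem assms(7) by linarith
  qed
  have C: "C12 n1 d1 k1 n2 d2 k2 = (n-1)*e - (n1-1)*m + k2*(n1-1)*q + n2 - k2 - n1*n2"
    using ident2[of n1 e q n2 k2 m] d2e d1e nn kk assms(10) by simp
  show ?thesis
  proof (cases "n1 = 1")
    case True
    have "C12 n1 d1 k1 n2 d2 k2 = n2*e - k2" using C True nn by simp
    moreover have "n2*e \<ge> n2*1" using e1 n2 by (intro mult_left_mono) auto
    moreover have "n2 > k2" using Dpos True by simp
    ultimately show ?thesis by linarith
  next
    case False
    hence n12: "n1 \<ge> 2" using n1 by simp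
    show ?thesis
    proof (cases "k2 = 0")
      case True
      hence "n2 = 1" using A by auto
      hence "C12 n1 d1 k1 n2 d2 k2 = n1*e - (n1-1)*m - (n1-1)" using C True nn by (simp add: algebra_simps)
      moreover have "(n1-1)*m \<le> (n1-1)*(e-1)" using kem True kk n12 by (intro mult_left_mono) auto
      ultimately show ?thesis using e1 by (simp add: algebra_simps)
    next
      case False
      hence k21: "k2 \<ge> 1" using k2 by simp
      hence "real_of_int d2 \<ge> real_of_int (n2^2 - 1) / real_of_int k2 - real_of_int (n2 - k2)"
        using A by auto
      hence "real_of_int d2 * real_of_int k2 \<ge> real_of_int (n2^2 - 1) - real_of_int (n2 - k2) * real_of_int k2"
        using k21 by (simp add: field_simps)
      hence d2b: "k2*d2 \<ge> n2^2 - 1 - k2*(n2-k2)"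
        by (simp add: algebra_simps flip: of_int_mult of_int_le_iff of_int_power of_int_add)
      have d2q: "d2 = q*(n2-k2) + m - e" using d2e d1e nn kk by (simp add: algebra_simps)
      have "(n1-1)*(k2*d2) \<ge> (n1-1)*(n2^2 - 1 - k2*(n2-k2))"
        using d2b n12 by (intro mult_left_mono) auto
      hence "(n2-k2)*C12 n1 d1 k1 n2 d2 k2 \<ge>
          (n2-k2)*(n1+n2-1)*e - (n1-1)*n2*m - k2*(n2-k2) + (n1-1)*(k2^2-1+k2*e)"
      proof -
        have "(n1-1)*(k2*d2) = (n1-1)*(k2*(q*(n2-k2)+m-e))" using d2q by simp
        moreover have "(n2-k2)*C12 n1 d1 k1 n2 d2 k2 = (n2-k2)*((n1+n2-1)*e - (n1-1)*m + k2*(n1-1)*q + n2 - k2 - n1*n2)"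
          using C nn by simp
        ultimately show ?thesis using ident3[of n2 k2 n1 e m q] \<open>(n1-1)*(k2*d2) \<ge> _\<close> by linarith
      qed
      moreover have "(n2-k2)*(n1+n2-1)*e - (n1-1)*n2*m - k2*(n2-k2) + (n1-1)*(k2^2-1+k2*e) > 0"
      proof -
        have h1: "n2 \<ge> n1*k2 + 1" using Dpos by simp
        have h2: "m \<le> (1+k2)*e - 1" using kem kk by simp
        show ?thesis using final_ineq[OF n12 k21 h1 e1 assms(7) h2] .
      qed
      ultimately have "(n2-k2)*C12 n1 d1 k1 n2 d2 k2 > 0" by linarith
      moreover have "n2 - k2 > 0"
      proof -
        have "n1*k2 \<ge> 1*k2" using n1 k2 by (intro mult_right_mono) auto
        thus ?thesis using Dpos by simp
      qed
      ultimately show ?thesis using zero_less_mult_pos by blast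
    qed
  qed
qed

end
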